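(* Let $(M,\Sigma)$ be a measurable space, $r\ge1$, and $\mu_1,\dots,\mu_r$ non-atomic countably additive finite measures on $\Sigma$; put $\mu=\frac1r\sum_{i=1}^r\mu_i$. For $k\ge1$ let $t(k)=k\bmod r$ if this is nonzero and $t(k)=r$ otherwise. Let $(H_k)_{k\ge1}$ be a sequence of measurable sets such that for every $k$: $H_k\subseteq M\setminus\bigcup_{i=1}^{k-1}H_i$, $H_k$ admits a strong solution (a partition $H_k=F_1\sqcup\dots\sqcup F_r$ with $\mu_i(F_i)\ge\mu_i(F_j)$ for all $i,j$), and $\mu_{t(k)}(H_k)\ge 2^{-(r-1)}\mu_{t(k)}\bigl(M\setminus\bigcup_{i=1}^{k-1}H_i\bigr)$. For $s\ge0$ let $M_s=M\setminus\bigcup_{i=1}^{sr}H_i$. Then for every $s\ge0$, $$\mu(M_s)\le\Bigl(\frac{2^{r-1}-1}{2^{r-1}}\Bigr)^{s}\mu(M).$$ *)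

theory Defs
  imports "HOL-Analysis.Analysis"
begin

definition nonatomic :: "'a measure \<Rightarrow> bool" where
  "nonatomic m \<longleftrightarrow> (\<forall>A\<in>sets m. emeasure m A > 0 \<longrightarrow>
      (\<exists>B\<in>sets m. B \<subseteq> A \<and> 0 < emeasure m B \<and> emeasure m B < emeasure m A))"

definition strong_solution :: "(nat \<Rightarrow> 'a measure) \<Rightarrow> nat \<Rightarrow> 'a set \<Rightarrow> bool" where
  "strong_solution mu r H \<longleftrightarrow> (\<exists>F :: nat \<Rightarrow> 'a set.
      (\<forall>i\<in>{1..r}. F i \<in> sets (mu i)) \<and>
      (\<Union>i\<in>{1..r}. F i) = H \<and>
      disjoint_family_on F {1..r} \<and>
      (\<forall>i\<in>{1..r}. \<forall>j\<in>{1..r}. measure (mu i) (F j) \<le> measure (mu i) (F i)))"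

definition tidx :: "nat \<Rightarrow> nat \<Rightarrow> nat" where
  "tidx r k = (if k mod r \<noteq> 0 then k mod r else r)"

definition avg_measure :: "(nat \<Rightarrow> 'a measure) \<Rightarrow> nat \<Rightarrow> 'a set \<Rightarrow> real" where
  "avg_measure mu r A = (1 / real r) * (\<Sum>i=1..r. measure (mu i) A)"

end

theory Submission
  imports Defs
begin

theorem corollary2:
  fixes N :: "'a measure" and mu :: "nat \<Rightarrow> 'a measure" and r :: nat
    and H :: "nat \<Rightarrow> 'a set"
  assumes r: "r \<ge> 1"
    and sets_mu: "\<And>i. i \<in> {1..r} \<Longrightarrow> sets (mu i) = sets N"
    and fin: "\<And>i. i \<in> {1..r} \<Longrightarrow> finite_measure (mu i)"
    and nonat: "\<And>i. i \<in> {1..r} \<Longrightarrow> nonatomic (mu i)"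
    and H_meas: "\<And>k. k \<ge> 1 \<Longrightarrow> H k \<in> sets N"
    and H_sub: "\<And>k. k \<ge> 1 \<Longrightarrow> H k \<subseteq> space N - (\<Union>i\<in>{1..<k}. H i)"
    and H_strong: "\<And>k. k \<ge> 1 \<Longrightarrow> strong_solution mu r (H k)"
    and H_big: "\<And>k. k \<ge> 1 \<Longrightarrow>
        measure (mu (tidx r k)) (H k) \<ge>
          (1 / 2 ^ (r - 1)) * measure (mu (tidx r k)) (space N - (\<Union>i\<in>{1..<k}. H i))"
  shows "\<forall>s::nat. avg_measure mu r (space N - (\<Union>i\<in>{1..s*r}. H i))
           \<le> ((2 ^ (r - 1) - 1) / 2 ^ (r - 1)) ^ s * avg_measure mu r (space N)"
proof
  fix s :: nat
  define a :: real where "a = 1 / 2 ^ (r - 1)"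
  define c :: real where "c = (2 ^ (r - 1) - 1) / 2 ^ (r - 1)"
  have ca: "c = 1 - a" unfolding a_def c_def by (simp add: field_simps)
  have a_le: "a \<le> 1" and a_ge: "0 \<le> a" unfolding a_def by auto
  have c_ge: "0 \<le> c" using ca a_le by simp
  define M where "M k = space N - (\<Union>i\<in>{1..k}. H i)" for k
  have M_meas: "M k \<in> sets N" for k
    unfolding M_def using H_meas by (intro sets.Diff sets.top sets.finite_UN) auto
  have M_anti: "M k \<subseteq> M j" if "j \<le> k" for j k
    unfolding M_def using that by auto
  have M_step: "M k = M (k - 1) - H k" if "k \<ge> 1" for k
  proof -
    have "{1..k} = insert k {1..k-1}" using that by auto
    then show ?thesis unfolding M_def by auto
  qed
  have Msub: "space N - (\<Union>i\<in>{1..<k}. H i) = M (k - 1)" if "k \<ge> 1" for k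
  proof -
    have "{1..<k} = {1..k-1}" using that by auto
    then show ?thesis unfolding M_def by simp
  qed
  have key: "measure (mu i) (M ((t+1)*r)) \<le> c * measure (mu i) (M (t*r))"
    if i: "i \<in> {1..r}" for i t
  proof -
    interpret finite_measure "mu i" using fin[OF i] .
    have sp: "space (mu i) = space N" using sets_mu[OF i] by (rule sets_eq_imp_space_eq)
    define k where "k = t*r + i"
    have k1: "k \<ge> 1" using i k_def by auto
    have tk: "tidx r k = i"
    proof (cases "i = r")
      case True then show ?thesis unfolding tidx_def k_def by simp
    next
      case False then have "i < r" using i by auto
      then have "k mod r = i" unfolding k_def by simp
      then show ?thesis using i unfolding tidx_def by auto
    qed
    have Hs: "H k \<subseteq> M (k - 1)" using H_sub[OF k1] Msub[OF k1] by simp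
    have mH: "H k \<in> sets (mu i)" using H_meas[OF k1] sets_mu[OF i] by simp
    have mM: "M j \<in> sets (mu i)" for j using M_meas sets_mu[OF i] by simp
    have big: "measure (mu i) (H k) \<ge> a * measure (mu i) (M (k - 1))"
      using H_big[OF k1] tk Msub[OF k1] unfolding a_def by simp
    have "measure (mu i) (M ((t+1)*r)) \<le> measure (mu i) (M k)"
      using M_anti[of k "(t+1)*r"] i k_def mM by (intro finite_measure_mono) auto
    also have "\<dots> = measure (mu i) (M (k - 1)) - measure (mu i) (H k)"
      using M_step[OF k1] finite_measure_Diff[OF mM mH Hs] by simp
    also have "\<dots> \<le> c * measure (mu i) (M (k - 1))" unfolding ca using big by (simp add: left_diff_distrib)
    also have "\<dots> \<le> c * measure (mu i) (M (t * r))"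
    proof -
      have "M (k - 1) \<subseteq> M (t*r)" proof (rule M_anti)
        show "t*r \<le> k - 1" using k_def i by (cases i) auto
      qed
      then show ?thesis using mM c_ge by (intro mult_left_mono finite_measure_mono) auto
    qed
    finally show ?thesis .
  qed
  have ind: "measure (mu i) (M (t*r)) \<le> c ^ t * measure (mu i) (space N)"
    if i: "i \<in> {1..r}" for i t
  proof (induction t)
    case 0 then show ?case by (simp add: M_def)
  next
    case (Suc t)
    have "measure (mu i) (M (Suc t*r)) \<le> c * measure (mu i) (M (t*r))"
      using key[OF i, of t] by simp
    also have "\<dots> \<le> c * (c ^ t * measure (mu i) (space N))"
      using Suc c_ge by (intro mult_left_mono) auto
    finally show ?case by simp
  qed
  have "(\<Sum>i=1..r. measure (mu i) (M (s*r))) \<le> (\<Sum>i=1..r. c ^ s * measure (mu i) (space N))"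
    using ind by (intro sum_mono) auto
  then have "avg_measure mu r (M (s*r)) \<le> c ^ s * avg_measure mu r (space N)"
    unfolding avg_measure_def by (simp add: sum_distrib_left[symmetric] divide_right_mono)
  then show "avg_measure mu r (space N - (\<Union>i\<in>{1..s*r}. H i))
           \<le> ((2 ^ (r - 1) - 1) / 2 ^ (r - 1)) ^ s * avg_measure mu r (space N)"
    unfolding M_def c_def by simp
qed

end
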